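(* Let $k \geq 2$, $n \geq 1$, $\Sigma_k = \{0,1,\ldots,k-1\}$, and let $u \in \Sigma_k^n$ be primitive. Define the word $f_u$ symbol by symbol as follows: $f_u[i] = u[i]$ for $1 \leq i \leq n$; for $i \geq n+1$, if $f_u[i-n+1..i-1] = 0^{n-1}$ the construction terminates, and otherwise $f_u[i]$ is the smallest letter of $\Sigma_k$ such that $f_u[i-n+1..i]$ is primitive (such a letter always exists). Then $f_u$ is finite, i.e. the construction terminates after finitely many steps.
   Context: A word $w$ is primitive if there is no word $x$ and integer $p \geq 2$ with $w = x^p$. For a word $w$, $w[i]$ denotes its $i$-th symbol and $w[i..j] = w[i]w[i+1]\cdots w[j]$. *)

theory Defs
  imports Main
begin

definition primitive :: "nat list \<Rightarrow> bool" where
  "primitive w \<longleftrightarrow> \<not> (\<exists>x p. p \<ge> 2 \<and> w = concat (replicate p x))"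

text \<open>The last n-1 symbols of the current word, i.e. f[i-n+1..i-1] with i = length w + 1.\<close>
definition window :: "nat \<Rightarrow> nat list \<Rightarrow> nat list" where
  "window n w = drop (length w - (n - 1)) w"

definition stopped :: "nat \<Rightarrow> nat list \<Rightarrow> bool" where
  "stopped n w \<longleftrightarrow> window n w = replicate (n - 1) 0"

definition next_letter :: "nat \<Rightarrow> nat \<Rightarrow> nat list \<Rightarrow> nat" where
  "next_letter k n w = (LEAST a. a < k \<and> primitive (window n w @ [a]))"

definition fstep :: "nat \<Rightarrow> nat \<Rightarrow> nat list \<Rightarrow> nat list" where
  "fstep k n w = (if stopped n w then w else w @ [next_letter k n w])"

definition fu_iter :: "nat \<Rightarrow> nat list \<Rightarrow> nat \<Rightarrow> nat list" where
  "fu_iter k u m = (fstep k (length u) ^^ m) u"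

end

theory Submission
  imports Defs
begin

lemma concat_rep_len: "length (concat (replicate p x)) = p * length x"
  by (induction p) auto

lemma concat_rep_nth:
  "i < p * length x \<Longrightarrow> concat (replicate p x) ! i = x ! (i mod length x)"
proof (induction p arbitrary: i)
  case 0 then show ?case by simp
next
  case (Suc p)
  show ?case
  proof (cases "i < length x")
    case True then show ?thesis by (simp add: nth_append)
  next
    case False
    then have "i - length x < p * length x" using Suc.prems by auto
    then have "concat (replicate p x) ! (i - length x) = x ! ((i - length x) mod length x)"
      using Suc.IH by blast
    moreover have "(i - length x) mod length x = i mod length x"
      using False by (simp add: le_mod_geq)
    ultimately show ?thesis using False by (simp add: nth_append)
  qed
qed

lemma euclid_step:
  fixes v :: "nat list"
  assumes pp: "\<And>j. j + p < length v \<Longrightarrow> v ! j = v ! (j + p)"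
    and pq: "\<And>j. j + q < length v \<Longrightarrow> v ! j = v ! (j + q)"
    and "p < q" and "p + q \<le> length v" and "i + (q - p) < length v"
  shows "v ! i = v ! (i + (q - p))"
proof (cases "i + q < length v")
  case True
  have "v ! i = v ! (i + q)" using pq True by blast
  also have "\<dots> = v ! (i + (q - p))"
    using pp[of "i + (q - p)"] True assms(3) by auto
  finally show ?thesis .
next
  case False
  then have ip: "i \<ge> p" using assms by auto
  have "v ! i = v ! (i - p)" using pp[of "i - p"] ip assms by auto
  also have "\<dots> = v ! (i - p + q)" using pq[of "i - p"] ip assms by auto
  also have "i - p + q = i + (q - p)" using ip assms by auto
  finally show ?thesis .
qed

lemma key_lt:
  fixes v :: "nat list"
  assumes A: "v @ [a] = concat (replicate p x)" and B: "v @ [b] = concat (replicate q y)"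
    and p2: "p \<ge> 2" and q2: "q \<ge> 2" and lt: "length x < length y"
  shows "a = b"
proof -
  define n where "n = length v + 1"
  define d where "d = length x"
  define e where "e = length y"
  have nd: "p * d = n" using arg_cong[OF A, of length] by (simp add: concat_rep_len n_def d_def)
  have ne: "q * e = n" using arg_cong[OF B, of length] by (simp add: concat_rep_len n_def e_def)
  have de: "d < e" using lt d_def e_def by simp
  have "d > 0" using nd n_def by (cases d) auto
  have "q < p"
  proof (rule ccontr)
    assume "\<not> q < p" then have "p \<le> q" by simp
    then have "p * d \<le> q * d" by simp
    also have "q * d < q * e" using de q2 by simp
    finally show False using nd ne by simp
  qed
  then have "p \<ge> 3" using q2 by simp
  then have "3 * d \<le> n" using nd by (metis mult_le_mono1)
  moreover have "2 * e \<le> n" using ne q2 by (metis mult_le_mono1)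
  ultimately have sum: "d + e \<le> length v" using n_def \<open>d>0\<close> by linarith
  have "e > 0" using de by simp
  have perA: "\<And>j. j + d < n \<Longrightarrow> (v@[a]) ! j = (v@[a]) ! (j + d)"
  proof -
    fix j assume "j + d < n"
    then show "(v@[a]) ! j = (v@[a]) ! (j + d)"
      using A concat_rep_nth[of j p x] concat_rep_nth[of "j+d" p x] nd d_def by simp
  qed
  have perB: "\<And>j. j + e < n \<Longrightarrow> (v@[b]) ! j = (v@[b]) ! (j + e)"
  proof -
    fix j assume "j + e < n"
    then show "(v@[b]) ! j = (v@[b]) ! (j + e)"
      using B concat_rep_nth[of j q y] concat_rep_nth[of "j+e" q y] ne e_def by simp
  qed
  have pp: "\<And>j. j + d < length v \<Longrightarrow> v ! j = v ! (j + d)"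
  proof -
    fix j assume h: "j + d < length v"
    then have "j + d < n" using n_def by simp
    from perA[OF this] h show "v ! j = v ! (j + d)" by (simp add: nth_append)
  qed
  have pq: "\<And>j. j + e < length v \<Longrightarrow> v ! j = v ! (j + e)"
  proof -
    fix j assume h: "j + e < length v"
    then have "j + e < n" using n_def by simp
    from perB[OF this] h show "v ! j = v ! (j + e)" by (simp add: nth_append)
  qed
  have "a = (v@[a]) ! (n - 1 - d + d)" using n_def sum by simp
  also have "\<dots> = (v@[a]) ! (n - 1 - d)" using perA[of "n-1-d"] n_def sum by simp
  also have "\<dots> = v ! (n - 1 - e + (e - d))" using n_def sum de \<open>d>0\<close> by (auto simp add: nth_append)
  also have "\<dots> = v ! (n - 1 - e)"
    using euclid_step[OF pp pq de sum, of "n-1-e"] n_def sum de \<open>d>0\<close> by simp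
  also have "\<dots> = (v@[b]) ! (n - 1 - e)" using n_def sum de \<open>d>0\<close> by (auto simp add: nth_append)
  also have "\<dots> = (v@[b]) ! (n - 1 - e + e)" using perB[of "n-1-e"] n_def sum by simp
  also have "\<dots> = b" using n_def sum by simp
  finally show ?thesis .
qed

lemma key_eq:
  fixes v :: "nat list"
  assumes A: "v @ [a] = concat (replicate p x)" and B: "v @ [b] = concat (replicate q y)"
    and p2: "p \<ge> 2" and q2: "q \<ge> 2"
  shows "a = b"
proof -
  have "length x < length y \<or> length y < length x \<or> length x = length y" by auto
  moreover
  { assume xy: "length x = length y"
    define n where "n = length v + 1"
    define d where "d = length x"
    have nd: "p * d = n" using arg_cong[OF A, of length] by (simp add: concat_rep_len n_def d_def)
    have ne: "q * d = n" using arg_cong[OF B, of length] xy by (simp add: concat_rep_len n_def d_def)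
    have d0: "d > 0" using nd n_def by (cases d) auto
    have "2 * d \<le> p * d" using p2 by (rule mult_le_mono1)
    then have d2: "2 * d \<le> n" using nd by simp
    define r where "r = (n-1) mod d"
    have rd: "r < d" using d0 r_def by simp
    have rn: "r < n - 1" using rd d2 d0 by linarith
    have "a = (v@[a]) ! (n-1)" using n_def by simp
    also have "\<dots> = x ! r" using A concat_rep_nth[of "n-1" p x] nd n_def r_def d_def by simp
    also have "\<dots> = (v@[a]) ! r"
      using A concat_rep_nth[of r p x] nd rn rd d_def by simp
    also have "\<dots> = (v@[b]) ! r" using rn n_def by (simp add: nth_append)
    also have "\<dots> = y ! r"
      using B concat_rep_nth[of r q y] ne rn rd d_def xy by simp
    also have "\<dots> = (v@[b]) ! (n-1)" using B concat_rep_nth[of "n-1" q y] ne n_def r_def d_def xy by simp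
    also have "\<dots> = b" using n_def by simp
    finally have "a = b" .
  }
  ultimately show ?thesis using key_lt[OF A B p2 q2] key_lt[OF B A q2 p2] by auto
qed

lemma exists_prim:
  assumes "k \<ge> 2" shows "\<exists>a<k. primitive (v @ [a])"
proof (rule ccontr)
  assume "\<not> ?thesis"
  then have "\<not> primitive (v @ [0])" "\<not> primitive (v @ [1])" using assms by auto
  then obtain x p y q where "p \<ge> 2" "v @ [0] = concat (replicate p x)"
    "q \<ge> 2" "v @ [1] = concat (replicate q y)" unfolding primitive_def by blast
  then have "(0::nat) = 1" using key_eq by blast
  then show False by simp
qed

theorem lemma4:
  fixes k n :: nat and u :: "nat list"
  assumes "k \<ge> 2" and "n \<ge> 1" and "length u = n" and "set u \<subseteq> {0..<k}"
    and "primitive u"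
  shows "\<exists>m. stopped n (fu_iter k u m) \<and>
           (\<forall>j<m. \<exists>a<k. primitive (window n (fu_iter k u j) @ [a]))"
proof -
  have ex: "\<And>j. \<exists>a<k. primitive (window n (fu_iter k u j) @ [a])"
    using exists_prim assms(1) by blast
  define w where "w = fu_iter k u"
  have "\<exists>m. stopped n (w m)"
  proof (rule ccontr)
    assume "\<not> (\<exists>m. stopped n (w m))"
    then have nst: "\<And>m. \<not> stopped n (w m)" by blast
    have step: "\<And>m. w (Suc m) = w m @ [next_letter k n (w m)]"
      using nst assms(3) by (simp add: w_def fu_iter_def fstep_def)
    have len: "\<And>m. length (w m) = n + m"
    proof -
      fix m show "length (w m) = n + m"
        by (induction m) (auto simp: step, simp add: w_def fu_iter_def assms(3))
    qed
    have pref: "\<And>i m j. i < n + m \<Longrightarrow> w (m + j) ! i = w m ! i"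
    proof -
      fix i m j assume "i < n + m"
      then show "w (m + j) ! i = w m ! i"
        by (induction j) (auto simp: step nth_append len)
    qed
    define f where "f i = w i ! i" for i
    have fw: "\<And>i m. i < n + m \<Longrightarrow> w m ! i = f i"
    proof -
      fix i m assume h: "i < n + m"
      show "w m ! i = f i"
      proof (cases "i \<le> m")
        case True
        then have "w m = w (i + (m - i))" by simp
        then show ?thesis using pref[of i i "m - i"] assms(2) f_def by simp
      next
        case False
        then have "w i = w (m + (i - m))" by simp
        then show ?thesis using pref[of i m "i - m"] h f_def by simp
      qed
    qed
    have fnext: "\<And>m. f (n + m) = next_letter k n (w m)"
      using fw[of "n+m" "Suc m" for m] step len by (simp add: nth_append)
    have winlen: "\<And>m. length (window n (w m)) = n - 1"
      using len by (simp add: window_def)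
    have winnth: "\<And>m j. j < n - 1 \<Longrightarrow> window n (w m) ! j = f (Suc m + j)"
    proof -
      fix m j assume "j < n - 1"
      then show "window n (w m) ! j = f (Suc m + j)"
        using len[of m] fw[of "Suc m + j" m] assms(2) by (simp add: window_def)
    qed
    define P where "P T = (\<exists>N. \<forall>s\<ge>N. \<exists>i<T. f (s + i) \<noteq> 0)" for T
    have Pn: "P (n - 1)"
      unfolding P_def
    proof (rule exI[of _ 1], intro allI impI)
      fix s :: nat assume "s \<ge> 1"
      show "\<exists>i<n - 1. f (s + i) \<noteq> 0"
      proof (rule ccontr)
        assume "\<not> ?thesis"
        then have z: "\<And>i. i < n - 1 \<Longrightarrow> f (s + i) = 0" by blast
        have "window n (w (s - 1)) = replicate (n - 1) 0"
          by (rule nth_equalityI) (use winlen winnth z \<open>s \<ge> 1\<close> in auto)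
        then show False using nst unfolding stopped_def by blast
      qed
    qed
    define T where "T = (LEAST T. P T)"
    have PT: "P T" using Pn T_def by (metis LeastI)
    have Tle: "T \<le> n - 1" using Pn T_def by (metis Least_le)
    have "T \<noteq> 0" using PT unfolding P_def by auto
    then obtain T' where T': "T = Suc T'" by (cases T) auto
    have nP: "\<not> P T'" using T' T_def by (metis lessI not_less_Least)
    obtain N where N: "\<And>s. s \<ge> N \<Longrightarrow> \<exists>i<Suc T'. f (s + i) \<noteq> 0"
      using PT T' unfolding P_def by blast
    obtain s where s: "s \<ge> N + n" and zs: "\<And>i. i < T' \<Longrightarrow> f (s + i) = 0"
      using nP unfolding P_def by (metis not_less)
    have fne: "f (s + T') \<noteq> 0"
      using N[of s] zs s by (metis less_Suc_eq le_add1 le_trans)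
    define m where "m = s + T' - n"
    have im: "s + T' = n + m" using s m_def by simp
    define v where "v = window n (w m)"
    have nl: "next_letter k n (w m) \<noteq> 0" using fne fnext im by metis
    have "\<not> primitive (v @ [0])"
    proof
      assume "primitive (v @ [0])"
      then have "next_letter k n (w m) \<le> 0" unfolding next_letter_def v_def
        using assms(1) by (intro Least_le) simp
      then show False using nl by simp
    qed
    then obtain x p where p2: "p \<ge> 2" and xp: "v @ [0] = concat (replicate p x)"
      unfolding primitive_def by blast
    define g where "g = v @ [0]"
    define d where "d = length x"
    have vlen: "length v = n - 1" using winlen v_def by simp
    have nd: "p * d = n" using arg_cong[OF xp, of length] vlen assms(2)
      by (simp add: concat_rep_len d_def)
    have d0: "d > 0" using nd assms(2) by (cases d) auto
    have "2 * d \<le> p * d" using p2 by (rule mult_le_mono1)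
    then have d2: "2 * d \<le> n" using nd by simp
    have gper: "\<And>j. j < n \<Longrightarrow> g ! j = x ! (j mod d)"
      using xp concat_rep_nth nd g_def d_def by metis
    have gf: "\<And>j. j < n - 1 \<Longrightarrow> g ! j = f (Suc m + j)"
      using winnth vlen g_def v_def by (simp add: nth_append)
    have glast: "g ! (n - 1) = 0" using g_def vlen by (metis nth_append_length)
    have gz: "\<And>j. n - 1 - T' \<le> j \<Longrightarrow> j < n \<Longrightarrow> g ! j = 0"
    proof -
      fix j assume "n - 1 - T' \<le> j" "j < n"
      show "g ! j = 0"
      proof (cases "j = n - 1")
        case True then show ?thesis using glast by simp
      next
        case False
        then have "j < n - 1" using \<open>j < n\<close> by simp
        then have "g ! j = f (Suc m + j)" by (rule gf)
        also have "Suc m + j = s + (j - (n - 1 - T'))"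
          using im \<open>n - 1 - T' \<le> j\<close> \<open>j < n - 1\<close> Tle T' by simp
        also have "f \<dots> = 0" using zs \<open>j < n - 1\<close> \<open>n - 1 - T' \<le> j\<close> by (intro zs) simp
        finally show ?thesis .
      qed
    qed
    have shift: "\<And>r. r < d \<Longrightarrow> (n - d + r) mod d = r"
    proof -
      fix r assume "r < d"
      have "n - d = (p - 1) * d" using nd by (simp add: diff_mult_distrib)
      then show "(n - d + r) mod d = r" using \<open>r < d\<close> by simp
    qed
    show False
    proof (cases "d \<le> Suc T'")
      case True
      have "v = replicate (n - 1) 0"
      proof (rule nth_equalityI)
        show "length v = length (replicate (n - 1) 0)" using vlen by simp
        fix j assume "j < length v"
        then have jn: "j < n - 1" using vlen by simp
        have rd: "j mod d < d" using d0 by simp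
        have "v ! j = g ! j" using jn vlen g_def by (simp add: nth_append)
        also have "\<dots> = x ! (j mod d)" using gper jn by simp
        also have "\<dots> = g ! (n - d + j mod d)"
          using gper[of "n - d + j mod d"] shift[OF rd] rd d2 by simp
        also have "\<dots> = 0" using gz[of "n - d + j mod d"] rd d2 True by simp
        finally show "v ! j = replicate (n - 1) 0 ! j" using jn by simp
      qed
      then show False using nst[of m] v_def unfolding stopped_def by simp
    next
      case False
      have "\<exists>i<Suc T'. f (s - n + d + i) \<noteq> 0" using N[of "s - n + d"] s by simp
      then obtain t where t: "t < Suc T'" "f (s - n + d + t) \<noteq> 0" by blast
      define j where "j = d - Suc T' + t"
      have jd: "j < d" using t False j_def by simp
      have jn: "j < n - 1" using jd d2 d0 by simp
      have "s - n + d + t = Suc m + j" using im j_def False t s by linarith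
      then have "f (s - n + d + t) = f (Suc m + j)" by simp
      also have "\<dots> = g ! j" using gf jn by simp
      also have "\<dots> = x ! j" using gper[of j] jn jd by simp
      also have "\<dots> = g ! (n - d + j)" using gper[of "n - d + j"] shift[OF jd] jd d2 by simp
      also have "\<dots> = 0" using gz[of "n - d + j"] jd d2 False j_def t by simp
      finally show False using t by simp
    qed
  qed
  then show ?thesis using ex w_def by blast
qed

end
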